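(* For every $n\ge4$, a relation on $\mathcal P$ is $\Sigma_n$-definable in $\mathbf Y^*=\langle\mathcal P,\le,[1]+[1]\rangle$ if and only if it is $\Sigma_n$-definable in $\langle\mathcal P,\le,\pi:\pi\in\mathcal P\rangle$.
   Context: $\mathcal P$ is the set of all integer partitions, including the empty partition; a partition is a nonincreasing finite sequence of positive integers. Young's lattice $\mathbf Y=\langle\mathcal P,\le\rangle$ has $(s_1,\dots,s_r)\le(n_1,\dots,n_t)$ iff $r\le t$ and $s_i\le n_i$ for all $i\le r$; $\mathbf Y^*$ is $\mathbf Y$ with a constant symbol for the partition $(1,1)$, and $\langle\mathcal P,\le,\pi:\pi\in\mathcal P\rangle$ is $\mathbf Y$ expanded by a constant symbol for every partition. A relation is $\Sigma_n$-definable in a structure if it is defined by a first-order formula in the structure's language in prenex form with $n$ alternating quantifier blocks, the outermost existential, and a quantifier-free matrix. *)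

theory Defs
  imports Main
begin

definition is_partition :: "nat list \<Rightarrow> bool" where
  "is_partition p \<longleftrightarrow> sorted_wrt (\<ge>) p \<and> (\<forall>x\<in>set p. 0 < x)"

definition Partitions :: "nat list set" where
  "Partitions = {p. is_partition p}"

definition young_le :: "nat list \<Rightarrow> nat list \<Rightarrow> bool" where
  "young_le s t \<longleftrightarrow> length s \<le> length t \<and> (\<forall>i<length s. s ! i \<le> t ! i)"

datatype 'c trm = Var nat | Cst 'c

datatype 'c fm =
    Le "'c trm" "'c trm"
  | Eq "'c trm" "'c trm"
  | Neg "'c fm"
  | Conj "'c fm" "'c fm"
  | Disj "'c fm" "'c fm"
  | Ex nat "'c fm"
  | All nat "'c fm"

fun tval :: "('c \<Rightarrow> nat list) \<Rightarrow> (nat \<Rightarrow> nat list) \<Rightarrow> 'c trm \<Rightarrow> nat list" where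
  "tval I e (Var i) = e i"
| "tval I e (Cst c) = I c"

fun sat :: "('c \<Rightarrow> nat list) \<Rightarrow> (nat \<Rightarrow> nat list) \<Rightarrow> 'c fm \<Rightarrow> bool" where
  "sat I e (Le s t) = young_le (tval I e s) (tval I e t)"
| "sat I e (Eq s t) = (tval I e s = tval I e t)"
| "sat I e (Neg f) = (\<not> sat I e f)"
| "sat I e (Conj f g) = (sat I e f \<and> sat I e g)"
| "sat I e (Disj f g) = (sat I e f \<or> sat I e g)"
| "sat I e (Ex x f) = (\<exists>p\<in>Partitions. sat I (e(x := p)) f)"
| "sat I e (All x f) = (\<forall>p\<in>Partitions. sat I (e(x := p)) f)"

fun tvars :: "'c trm \<Rightarrow> nat set" where
  "tvars (Var i) = {i}"
| "tvars (Cst c) = {}"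

fun trm_consts :: "'c trm \<Rightarrow> 'c set" where
  "trm_consts (Var i) = {}"
| "trm_consts (Cst c) = {c}"

fun fv :: "'c fm \<Rightarrow> nat set" where
  "fv (Le s t) = tvars s \<union> tvars t"
| "fv (Eq s t) = tvars s \<union> tvars t"
| "fv (Neg f) = fv f"
| "fv (Conj f g) = fv f \<union> fv g"
| "fv (Disj f g) = fv f \<union> fv g"
| "fv (Ex x f) = fv f - {x}"
| "fv (All x f) = fv f - {x}"

fun fm_consts :: "'c fm \<Rightarrow> 'c set" where
  "fm_consts (Le s t) = trm_consts s \<union> trm_consts t"
| "fm_consts (Eq s t) = trm_consts s \<union> trm_consts t"
| "fm_consts (Neg f) = fm_consts f"
| "fm_consts (Conj f g) = fm_consts f \<union> fm_consts g"
| "fm_consts (Disj f g) = fm_consts f \<union> fm_consts g"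
| "fm_consts (Ex x f) = fm_consts f"
| "fm_consts (All x f) = fm_consts f"

fun qfree :: "'c fm \<Rightarrow> bool" where
  "qfree (Le s t) = True"
| "qfree (Eq s t) = True"
| "qfree (Neg f) = qfree f"
| "qfree (Conj f g) = (qfree f \<and> qfree g)"
| "qfree (Disj f g) = (qfree f \<and> qfree g)"
| "qfree (Ex x f) = False"
| "qfree (All x f) = False"

definition Exs :: "nat list \<Rightarrow> 'c fm \<Rightarrow> 'c fm" where
  "Exs xs f = foldr Ex xs f"

definition Alls :: "nat list \<Rightarrow> 'c fm \<Rightarrow> 'c fm" where
  "Alls xs f = foldr All xs f"

fun is_sigma :: "nat \<Rightarrow> 'c fm \<Rightarrow> bool"
and is_pi :: "nat \<Rightarrow> 'c fm \<Rightarrow> bool" where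
  "is_sigma 0 f = qfree f"
| "is_pi 0 f = qfree f"
| "is_sigma (Suc n) f = (\<exists>xs g. f = Exs xs g \<and> is_pi n g)"
| "is_pi (Suc n) f = (\<exists>xs g. f = Alls xs g \<and> is_sigma n g)"

definition sigma_definable ::
  "('c \<Rightarrow> nat list) \<Rightarrow> 'c set \<Rightarrow> nat \<Rightarrow> nat \<Rightarrow> nat list list set \<Rightarrow> bool" where
  "sigma_definable I C n k R \<longleftrightarrow>
     (\<exists>\<phi>. is_sigma n \<phi> \<and> fm_consts \<phi> \<subseteq> C \<and> fv \<phi> \<subseteq> {..<k} \<and>
        (\<forall>e. (\<forall>i. e i \<in> Partitions) \<longrightarrow> (sat I e \<phi> \<longleftrightarrow> map e [0..<k] \<in> R)))"

text \<open>Y*: one constant symbol interpreted as (1,1).\<close>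
definition I_Ystar :: "unit \<Rightarrow> nat list" where
  "I_Ystar _ = [1, 1]"

end

theory Submission
  imports Defs
begin


fun bv :: "'c fm \<Rightarrow> nat set" where
  "bv (Le s t) = {}"
| "bv (Eq s t) = {}"
| "bv (Neg f) = bv f"
| "bv (Conj f g) = bv f \<union> bv g"
| "bv (Disj f g) = bv f \<union> bv g"
| "bv (Ex x f) = insert x (bv f)"
| "bv (All x f) = insert x (bv f)"

lemma finite_tvars[simp]: "finite (tvars t)" by (cases t) auto
lemma finite_fv[simp]: "finite (fv f)" by (induction f) auto
lemma finite_bv[simp]: "finite (bv f)" by (induction f) auto
lemma finite_trm_consts[simp]: "finite (trm_consts t)" by (cases t) auto
lemma finite_consts[simp]: "finite (fm_consts f)" by (induction f) auto

lemma tval_cong: "(\<forall>i\<in>tvars t. e i = e' i) \<Longrightarrow> tval I e t = tval I e' t"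
  by (cases t) auto

lemma sat_cong: "(\<forall>i\<in>fv f. e i = e' i) \<Longrightarrow> sat I e f = sat I e' f"
proof (induction f arbitrary: e e')
  case (Le s t) then show ?case using tval_cong[of s e e' I] tval_cong[of t e e' I] by auto
next
  case (Eq s t) then show ?case using tval_cong[of s e e' I] tval_cong[of t e e' I] by auto
next
  case (Ex x f)
  have "\<And>p. sat I (e(x:=p)) f = sat I (e'(x:=p)) f" using Ex by (intro Ex.IH) auto
  then show ?case by simp
next
  case (All x f)
  have "\<And>p. sat I (e(x:=p)) f = sat I (e'(x:=p)) f" using All by (intro All.IH) auto
  then show ?case by simp
next
  case (Conj f1 f2)
  have "sat I e f1 = sat I e' f1" by (rule Conj.IH) (use Conj.prems in auto)
  moreover have "sat I e f2 = sat I e' f2" by (rule Conj.IH) (use Conj.prems in auto)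
  ultimately show ?case by simp
next
  case (Disj f1 f2)
  have "sat I e f1 = sat I e' f1" by (rule Disj.IH) (use Disj.prems in auto)
  moreover have "sat I e f2 = sat I e' f2" by (rule Disj.IH) (use Disj.prems in auto)
  ultimately show ?case by simp
next
  case (Neg f1)
  have "sat I e f1 = sat I e' f1" by (rule Neg.IH) (use Neg.prems in auto)
  then show ?case by simp
qed

lemma tval_consts_cong: "(\<forall>c\<in>trm_consts t. I c = I' c) \<Longrightarrow> tval I e t = tval I' e t"
  by (cases t) auto

lemma sat_consts_cong: "(\<forall>c\<in>fm_consts f. I c = I' c) \<Longrightarrow> sat I e f = sat I' e f"
proof (induction f arbitrary: e)
  case (Le s t) then show ?case using tval_consts_cong[of s I I' e] tval_consts_cong[of t I I' e] by auto
next
  case (Eq s t) then show ?case using tval_consts_cong[of s I I' e] tval_consts_cong[of t I I' e] by auto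
qed auto

lemma tval_map: "tval I e (map_trm g t) = tval (I \<circ> g) e t" by (cases t) auto
lemma sat_map: "sat I e (map_fm g f) = sat (I \<circ> g) e f"
  by (induction f arbitrary: e) (auto simp: tval_map)
lemma fv_map[simp]: "fv (map_fm g f) = fv f"
proof (induction f)
  case (Le s t) then show ?case by (cases s; cases t) auto
next
  case (Eq s t) then show ?case by (cases s; cases t) auto
qed auto
lemma consts_map[simp]: "fm_consts (map_fm g f) = g ` fm_consts f"
proof (induction f)
  case (Le s t) then show ?case by (cases s; cases t) auto
next
  case (Eq s t) then show ?case by (cases s; cases t) auto
qed auto
lemma qfree_map[simp]: "qfree (map_fm g f) = qfree f" by (induction f) auto
lemma map_Exs: "map_fm g (Exs xs f) = Exs xs (map_fm g f)" by (induction xs) (auto simp: Exs_def)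
lemma map_Alls: "map_fm g (Alls xs f) = Alls xs (map_fm g f)" by (induction xs) (auto simp: Alls_def)

lemma sigma_map: "(is_sigma n f \<longrightarrow> is_sigma n (map_fm g f)) \<and> (is_pi n f \<longrightarrow> is_pi n (map_fm g f))"
proof (induction n arbitrary: f)
  case 0 then show ?case by simp
next
  case (Suc n)
  show ?case
  proof (intro conjI impI)
    assume "is_sigma (Suc n) f"
    then obtain xs h where "f = Exs xs h" "is_pi n h" by auto
    then show "is_sigma (Suc n) (map_fm g f)" using Suc[of h] by (auto simp: map_Exs)
  next
    assume "is_pi (Suc n) f"
    then obtain xs h where "f = Alls xs h" "is_sigma n h" by auto
    then show "is_pi (Suc n) (map_fm g f)" using Suc[of h] by (auto simp: map_Alls)
  qed
qed

lemma Exs_Nil[simp]: "Exs [] f = f" and Exs_Cons[simp]: "Exs (x#xs) f = Ex x (Exs xs f)"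
  by (auto simp: Exs_def)
lemma Alls_Nil[simp]: "Alls [] f = f" and Alls_Cons[simp]: "Alls (x#xs) f = All x (Alls xs f)"
  by (auto simp: Alls_def)
lemma Exs_append: "Exs (xs@ys) f = Exs xs (Exs ys f)" by (induction xs) auto
lemma Alls_append: "Alls (xs@ys) f = Alls xs (Alls ys f)" by (induction xs) auto
lemma fv_Exs[simp]: "fv (Exs xs f) = fv f - set xs" by (induction xs) auto
lemma fv_Alls[simp]: "fv (Alls xs f) = fv f - set xs" by (induction xs) auto
lemma bv_Exs[simp]: "bv (Exs xs f) = bv f \<union> set xs" by (induction xs) auto
lemma bv_Alls[simp]: "bv (Alls xs f) = bv f \<union> set xs" by (induction xs) auto
lemma consts_Exs[simp]: "fm_consts (Exs xs f) = fm_consts f" by (induction xs) auto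
lemma consts_Alls[simp]: "fm_consts (Alls xs f) = fm_consts f" by (induction xs) auto

lemma sat_Exs: "sat I e (Exs xs f) \<longleftrightarrow>
   (\<exists>e'. (\<forall>i. i \<notin> set xs \<longrightarrow> e' i = e i) \<and> (\<forall>i\<in>set xs. e' i \<in> Partitions) \<and> sat I e' f)"
proof (induction xs arbitrary: e)
  case Nil
  then show ?case apply auto apply (subgoal_tac "e' = e") by (auto intro: ext)
next
  case (Cons x xs)
  show ?case
  proof
    assume "sat I e (Exs (x#xs) f)"
    then obtain p where p: "p \<in> Partitions" "sat I (e(x:=p)) (Exs xs f)" by auto
    then obtain e' where e': "\<forall>i. i \<notin> set xs \<longrightarrow> e' i = (e(x:=p)) i" "\<forall>i\<in>set xs. e' i \<in> Partitions" "sat I e' f"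
      using Cons by blast
    show "\<exists>e'. (\<forall>i. i \<notin> set (x#xs) \<longrightarrow> e' i = e i) \<and> (\<forall>i\<in>set (x#xs). e' i \<in> Partitions) \<and> sat I e' f"
    proof (intro exI[of _ e'] conjI ballI allI impI)
      fix i assume "i \<notin> set (x#xs)" then show "e' i = e i" using e'(1) by auto
    next
      fix i assume "i \<in> set (x#xs)" then show "e' i \<in> Partitions"
        using e' p by (cases "i \<in> set xs") auto
    qed (rule e'(3))
  next
    assume "\<exists>e'. (\<forall>i. i \<notin> set (x#xs) \<longrightarrow> e' i = e i) \<and> (\<forall>i\<in>set (x#xs). e' i \<in> Partitions) \<and> sat I e' f"
    then obtain e' where e': "\<forall>i. i \<notin> set (x#xs) \<longrightarrow> e' i = e i" "\<forall>i\<in>set (x#xs). e' i \<in> Partitions" "sat I e' f"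
      by blast
    have "sat I (e(x:=e' x)) (Exs xs f)"
      using e' by (subst Cons) (intro exI[of _ e'], auto)
    then show "sat I e (Exs (x#xs) f)" using e' by auto
  qed
qed

lemma sat_Alls: "sat I e (Alls xs f) \<longleftrightarrow>
   (\<forall>e'. (\<forall>i. i \<notin> set xs \<longrightarrow> e' i = e i) \<and> (\<forall>i\<in>set xs. e' i \<in> Partitions) \<longrightarrow> sat I e' f)"
proof -
  have "sat I e (Alls xs f) \<longleftrightarrow> \<not> sat I e (Exs xs (Neg f))"
    by (induction xs arbitrary: e) auto
  then show ?thesis by (simp add: sat_Exs) blast
qed



lemma Partitions_nonempty: "[] \<in> Partitions"
  by (simp add: Partitions_def is_partition_def)

fun substt :: "'c \<Rightarrow> nat \<Rightarrow> 'c trm \<Rightarrow> 'c trm" where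
  "substt p y (Var i) = Var i"
| "substt p y (Cst c) = (if c = p then Var y else Cst c)"

fun substc :: "'c \<Rightarrow> nat \<Rightarrow> 'c fm \<Rightarrow> 'c fm" where
  "substc p y (Le s t) = Le (substt p y s) (substt p y t)"
| "substc p y (Eq s t) = Eq (substt p y s) (substt p y t)"
| "substc p y (Neg f) = Neg (substc p y f)"
| "substc p y (Conj f g) = Conj (substc p y f) (substc p y g)"
| "substc p y (Disj f g) = Disj (substc p y f) (substc p y g)"
| "substc p y (Ex x f) = Ex x (substc p y f)"
| "substc p y (All x f) = All x (substc p y f)"

lemma tval_substt: "e y = I p \<Longrightarrow> tval I e (substt p y t) = tval I e t"
  by (cases t) auto

lemma sat_substc: "e y = I p \<Longrightarrow> y \<notin> bv f \<Longrightarrow> sat I e (substc p y f) = sat I e f"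
  by (induction f arbitrary: e) (auto simp: tval_substt)

lemma tvars_substt: "tvars (substt p y t) \<subseteq> tvars t \<union> {y}" by (cases t) auto
lemma fv_substc: "fv (substc p y f) \<subseteq> fv f \<union> {y}"
  by (induction f) (use tvars_substt in fastforce)+
lemma bv_substc[simp]: "bv (substc p y f) = bv f" by (induction f) auto
lemma tconsts_substt: "trm_consts (substt p y t) = trm_consts t - {p}" by (cases t) auto
lemma consts_substc: "fm_consts (substc p y f) = fm_consts f - {p}"
  by (induction f) (auto simp: tconsts_substt)
lemma qfree_substc[simp]: "qfree (substc p y f) = qfree f" by (induction f) auto
lemma substc_Exs: "substc p y (Exs xs f) = Exs xs (substc p y f)" by (induction xs) auto
lemma substc_Alls: "substc p y (Alls xs f) = Alls xs (substc p y f)" by (induction xs) auto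

lemma sigma_substc: "(is_sigma n f \<longrightarrow> is_sigma n (substc p y f)) \<and> (is_pi n f \<longrightarrow> is_pi n (substc p y f))"
proof (induction n arbitrary: f)
  case 0 then show ?case by simp
next
  case (Suc n)
  show ?case
  proof (intro conjI impI)
    assume "is_sigma (Suc n) f"
    then obtain xs h where "f = Exs xs h" "is_pi n h" by auto
    then show "is_sigma (Suc n) (substc p y f)" using Suc[of h] by (auto simp: substc_Exs)
  next
    assume "is_pi (Suc n) f"
    then obtain xs h where "f = Alls xs h" "is_sigma n h" by auto
    then show "is_pi (Suc n) (substc p y f)" using Suc[of h] by (auto simp: substc_Alls)
  qed
qed

fun push :: "'c fm \<Rightarrow> 'c fm \<Rightarrow> 'c fm" where
  "push t (Ex x f) = Ex x (push t f)"
| "push t (All x f) = All x (push t f)"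
| "push t f = Conj t f"

lemma sat_push: "fv t \<inter> bv f = {} \<Longrightarrow> sat I e (push t f) = (sat I e t \<and> sat I e f)"
proof (induction t f arbitrary: e rule: push.induct)
  case (1 t x f)
  have "\<And>p. sat I (e(x:=p)) t = sat I e t" by (rule sat_cong) (use 1 in auto)
  then show ?case using 1 by auto
next
  case (2 t x f)
  have "\<And>p. sat I (e(x:=p)) t = sat I e t" by (rule sat_cong) (use 2 in auto)
  then show ?case using 2 Partitions_nonempty by auto
qed auto

lemma fv_push: "fv (push t f) \<subseteq> fv t \<union> fv f" by (induction t f rule: push.induct) auto
lemma consts_push: "fm_consts (push t f) = fm_consts t \<union> fm_consts f" by (induction t f rule: push.induct) auto
lemma push_Exs: "push t (Exs xs f) = Exs xs (push t f)" by (induction xs) auto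
lemma push_Alls: "push t (Alls xs f) = Alls xs (push t f)" by (induction xs) auto

lemma sigma_push: "qfree t \<Longrightarrow> (is_sigma n f \<longrightarrow> is_sigma n (push t f)) \<and> (is_pi n f \<longrightarrow> is_pi n (push t f))"
proof (induction n arbitrary: f)
  case 0 then show ?case by (cases f) auto
next
  case (Suc n)
  show ?case
  proof (intro conjI impI)
    assume "is_sigma (Suc n) f"
    then obtain xs h where "f = Exs xs h" "is_pi n h" by auto
    then show "is_sigma (Suc n) (push t f)" using Suc(1)[of h] Suc(2) by (auto simp: push_Exs)
  next
    assume "is_pi (Suc n) f"
    then obtain xs h where "f = Alls xs h" "is_sigma n h" by auto
    then show "is_pi (Suc n) (push t f)" using Suc(1)[of h] Suc(2) by (auto simp: push_Alls)
  qed
qed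

lemma conj_Exs_L: "set xs \<inter> fv B = {} \<Longrightarrow> sat I e (Conj (Exs xs A) B) = sat I e (Exs xs (Conj A B))"
proof (induction xs arbitrary: e)
  case (Cons x xs)
  have "\<And>p. sat I (e(x:=p)) B = sat I e B" by (rule sat_cong) (use Cons in auto)
  then show ?case using Cons by auto
qed simp

lemma conj_Exs_R: "set xs \<inter> fv A = {} \<Longrightarrow> sat I e (Conj A (Exs xs B)) = sat I e (Exs xs (Conj A B))"
proof (induction xs arbitrary: e)
  case (Cons x xs)
  have "\<And>p. sat I (e(x:=p)) A = sat I e A" by (rule sat_cong) (use Cons in auto)
  then show ?case using Cons by auto
qed simp

lemma conj_Alls_L: "set xs \<inter> fv B = {} \<Longrightarrow> sat I e (Conj (Alls xs A) B) = sat I e (Alls xs (Conj A B))"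
proof (induction xs arbitrary: e)
  case (Cons x xs)
  have "\<And>p. sat I (e(x:=p)) B = sat I e B" by (rule sat_cong) (use Cons in auto)
  then show ?case using Cons Partitions_nonempty by auto
qed simp

lemma conj_Alls_R: "set xs \<inter> fv A = {} \<Longrightarrow> sat I e (Conj A (Alls xs B)) = sat I e (Alls xs (Conj A B))"
proof (induction xs arbitrary: e)
  case (Cons x xs)
  have "\<And>p. sat I (e(x:=p)) A = sat I e A" by (rule sat_cong) (use Cons in auto)
  then show ?case using Cons Partitions_nonempty by auto
qed simp

lemma Exs_cong: "(\<And>e. sat I e A = sat I e B) \<Longrightarrow> sat I e (Exs xs A) = sat I e (Exs xs B)"
  by (induction xs arbitrary: e) auto
lemma Alls_cong: "(\<And>e. sat I e A = sat I e B) \<Longrightarrow> sat I e (Alls xs A) = sat I e (Alls xs B)"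
  by (induction xs arbitrary: e) auto

lemma is_sigma_SS: "is_sigma (Suc (Suc m)) f \<longleftrightarrow> (\<exists>xs zs h. f = Exs xs (Alls zs h) \<and> is_sigma m h)"
  by auto

lemma dh1: "A \<subseteq> {N<..} \<Longrightarrow> B \<subseteq> {..(N::nat)} \<Longrightarrow> A \<inter> B = {}" by fastforce
lemma dh2: "A \<subseteq> {..<N} \<Longrightarrow> B \<subseteq> {(N::nat)..} \<Longrightarrow> A \<inter> B = {}" by fastforce

lemma gen_elim:
  assumes sig: "is_sigma (Suc (Suc m)) \<phi>"
    and fresh: "fv \<phi> \<union> bv \<phi> \<subseteq> {..<N}"
    and D: "D = Exs us (Alls ws \<theta>)" "qfree \<theta>" "set us \<union> set ws \<subseteq> {N<..}" "fv D \<subseteq> {N}"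
    and Ddef: "\<forall>e. (\<forall>i. e i \<in> Partitions) \<longrightarrow> (sat id e D \<longleftrightarrow> e N = p)"
    and pP: "p \<in> Partitions"
  shows "\<exists>\<psi>. is_sigma (Suc (Suc m)) \<psi> \<and> fm_consts \<psi> \<subseteq> (fm_consts \<phi> - {p}) \<union> fm_consts \<theta>
      \<and> fv \<psi> \<subseteq> fv \<phi> \<and> (\<forall>e. (\<forall>i. e i \<in> Partitions) \<longrightarrow> (sat id e \<psi> \<longleftrightarrow> sat id e \<phi>))"
proof -
  obtain xs zs h where phi: "\<phi> = Exs xs (Alls zs h)" and sh: "is_sigma m h"
    using sig is_sigma_SS by blast
  define h' where "h' = substc p N h"
  define \<psi> where "\<psi> = Exs (N # us @ xs) (Alls (ws @ zs) (push \<theta> h'))"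
  have F1: "fv h \<union> bv h \<union> set xs \<union> set zs \<subseteq> {..<N}" using fresh phi by auto
  have F3: "set us \<union> set ws \<subseteq> {N<..}" using D by auto
  have F2: "fv \<theta> \<subseteq> {N..}"
  proof
    fix i assume i: "i \<in> fv \<theta>"
    show "i \<in> {N..}"
    proof (cases "i \<in> set us \<union> set ws")
      case True then show ?thesis using F3 by auto
    next
      case False then show ?thesis using D(1,4) i by auto
    qed
  qed
  have fvh': "fv h' \<subseteq> fv h \<union> {N}" unfolding h'_def by (rule fv_substc)
  have bvh': "bv h' = bv h" unfolding h'_def by simp
  have L1: "fv h' \<subseteq> {..N}" using fvh' F1 by auto
  have ps: "is_sigma m (push \<theta> h')"
    using sigma_push[OF D(2), of m h'] sigma_substc[of m h p N] sh unfolding h'_def by simp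
  have s1: "is_sigma (Suc (Suc m)) \<psi>" unfolding is_sigma_SS \<psi>_def
    using ps by blast
  have s2: "fm_consts \<psi> \<subseteq> (fm_consts \<phi> - {p}) \<union> fm_consts \<theta>"
    unfolding \<psi>_def h'_def using phi by (simp add: consts_push consts_substc)
  have s3: "fv \<psi> \<subseteq> fv \<phi>"
  proof
    fix i assume "i \<in> fv \<psi>"
    then have i: "i \<in> fv \<theta> \<union> fv h'" "i \<noteq> N" "i \<notin> set us" "i \<notin> set xs" "i \<notin> set ws" "i \<notin> set zs"
      unfolding \<psi>_def using fv_push[of \<theta> h'] by auto
    have "i \<notin> fv \<theta>" using i D by auto
    then show "i \<in> fv \<phi>" using i fvh' phi by auto
  qed
  have d1: "set us \<inter> fv (Exs xs (Alls zs h')) = {}"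
    by (rule dh1[of _ N]) (use F3 L1 in auto)
  have d2: "set xs \<inter> fv (Alls ws \<theta>) = {}"
    by (rule dh2[of _ N]) (use F1 F2 in auto)
  have d3: "set ws \<inter> fv (Alls zs h') = {}"
    by (rule dh1[of _ N]) (use F3 L1 in auto)
  have d4: "set zs \<inter> fv \<theta> = {}"
    by (rule dh2[of _ N]) (use F1 F2 in auto)
  have d5: "bv h' \<inter> fv \<theta> = {}"
    by (rule dh2[of _ N]) (use F1 F2 bvh' in auto)
  have chain: "sat id e1 (Exs (us @ xs) (Alls (ws @ zs) (push \<theta> h'))) =
      (sat id e1 D \<and> sat id e1 (Exs xs (Alls zs h')))" for e1
  proof -
    have "sat id e1 (Conj D (Exs xs (Alls zs h'))) = sat id e1 (Exs us (Conj (Alls ws \<theta>) (Exs xs (Alls zs h'))))"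
      unfolding D(1) by (rule conj_Exs_L[OF d1])
    also have "\<dots> = sat id e1 (Exs us (Exs xs (Conj (Alls ws \<theta>) (Alls zs h'))))"
      by (rule Exs_cong, rule conj_Exs_R[OF d2])
    also have "\<dots> = sat id e1 (Exs us (Exs xs (Alls ws (Conj \<theta> (Alls zs h')))))"
      by (rule Exs_cong, rule Exs_cong, rule conj_Alls_L[OF d3])
    also have "\<dots> = sat id e1 (Exs us (Exs xs (Alls ws (Alls zs (Conj \<theta> h')))))"
      by (rule Exs_cong, rule Exs_cong, rule Alls_cong, rule conj_Alls_R[OF d4])
    also have "\<dots> = sat id e1 (Exs us (Exs xs (Alls ws (Alls zs (push \<theta> h')))))"
      using d5 by (intro Exs_cong Alls_cong, subst sat_push) auto
    finally show ?thesis by (simp add: Exs_append Alls_append)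
  qed
  have s4: "sat id e \<psi> \<longleftrightarrow> sat id e \<phi>" if eP: "\<forall>i. e i \<in> Partitions" for e
  proof -
    have "sat id e \<psi> \<longleftrightarrow> (\<exists>q\<in>Partitions. sat id (e(N:=q)) D \<and> sat id (e(N:=q)) (Exs xs (Alls zs h')))"
      unfolding \<psi>_def Exs_Cons sat.simps chain by simp
    also have "\<dots> \<longleftrightarrow> sat id (e(N:=p)) (Exs xs (Alls zs h'))"
      using Ddef eP pP by auto
    also have "\<dots> \<longleftrightarrow> sat id (e(N:=p)) \<phi>"
      unfolding phi h'_def substc_Exs[symmetric] substc_Alls[symmetric]
      by (rule sat_substc) (use F1 phi in auto)
    also have "\<dots> \<longleftrightarrow> sat id e \<phi>" by (rule sat_cong) (use fresh in auto)
    finally show ?thesis .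
  qed
  show ?thesis using s1 s2 s3 s4 by blast
qed



definition definer :: "nat list set \<Rightarrow> nat list \<Rightarrow> bool" where
  "definer K p \<longleftrightarrow> (\<forall>N. \<exists>us ws \<theta>. qfree \<theta> \<and> set us \<union> set ws \<subseteq> {N<..} \<and>
      fv (Exs us (Alls ws \<theta>)) \<subseteq> {N} \<and> fm_consts \<theta> \<subseteq> K \<and>
      (\<forall>e. (\<forall>i. e i \<in> Partitions) \<longrightarrow> (sat id e (Exs us (Alls ws \<theta>)) \<longleftrightarrow> e N = p)))"

definition equivP :: "nat list fm \<Rightarrow> nat list fm \<Rightarrow> bool" where
  "equivP \<psi> \<phi> \<longleftrightarrow> (\<forall>e. (\<forall>i. e i \<in> Partitions) \<longrightarrow> (sat id e \<psi> \<longleftrightarrow> sat id e \<phi>))"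

lemma fresh_bound: "finite S \<Longrightarrow> S \<subseteq> {..< Suc (Max (insert 0 S))}"
  by (auto simp: less_Suc_eq_le)

lemma elim_class:
  assumes KQ: "K \<inter> Q = {}"
    and QP: "Q \<subseteq> Partitions"
    and defs: "\<forall>p\<in>Q. definer K p"
  shows "is_sigma (Suc (Suc m)) \<phi> \<Longrightarrow> fm_consts \<phi> \<subseteq> K \<union> Q \<Longrightarrow>
    \<exists>\<psi>. is_sigma (Suc (Suc m)) \<psi> \<and> fm_consts \<psi> \<subseteq> K \<and> fv \<psi> \<subseteq> fv \<phi> \<and> equivP \<psi> \<phi>"
proof (induction "card (fm_consts \<phi> \<inter> Q)" arbitrary: \<phi> rule: less_induct)
  case less
  show ?case
  proof (cases "fm_consts \<phi> \<inter> Q = {}")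
    case True
    then show ?thesis using less.prems by (intro exI[of _ \<phi>]) (auto simp: equivP_def)
  next
    case False
    then obtain p where p: "p \<in> fm_consts \<phi>" "p \<in> Q" by blast
    define N where "N = Suc (Max (insert 0 (fv \<phi> \<union> bv \<phi>)))"
    have fresh: "fv \<phi> \<union> bv \<phi> \<subseteq> {..<N}" unfolding N_def by (rule fresh_bound) simp
    obtain us ws \<theta> where D: "qfree \<theta>" "set us \<union> set ws \<subseteq> {N<..}"
      "fv (Exs us (Alls ws \<theta>)) \<subseteq> {N}" "fm_consts \<theta> \<subseteq> K"
      "\<forall>e. (\<forall>i. e i \<in> Partitions) \<longrightarrow> (sat id e (Exs us (Alls ws \<theta>)) \<longleftrightarrow> e N = p)"
    proof -
      have "definer K p" using defs p(2) by (rule bspec)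
      then show ?thesis unfolding definer_def using that by metis
    qed
    have pP: "p \<in> Partitions" using QP p(2) by (rule subsetD)
    obtain \<psi>1 where psi1: "is_sigma (Suc (Suc m)) \<psi>1" "fm_consts \<psi>1 \<subseteq> (fm_consts \<phi> - {p}) \<union> fm_consts \<theta>"
      "fv \<psi>1 \<subseteq> fv \<phi>" "\<forall>e. (\<forall>i. e i \<in> Partitions) \<longrightarrow> (sat id e \<psi>1 \<longleftrightarrow> sat id e \<phi>)"
      using gen_elim[OF less.prems(1) fresh refl D(1,2,3,5) pP] by metis
    have c1: "fm_consts \<psi>1 \<subseteq> K \<union> Q" using psi1(2) D(4) less.prems(2) by blast
    have sub: "fm_consts \<psi>1 \<inter> Q \<subseteq> fm_consts \<phi> \<inter> Q - {p}" using psi1(2) D(4) KQ by blast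
    have "card (fm_consts \<psi>1 \<inter> Q) < card (fm_consts \<phi> \<inter> Q)"
    proof -
      have "card (fm_consts \<psi>1 \<inter> Q) \<le> card (fm_consts \<phi> \<inter> Q - {p})"
        by (rule card_mono[OF _ sub]) simp
      also have "\<dots> < card (fm_consts \<phi> \<inter> Q)"
        by (rule card_Diff1_less) (use p in auto)
      finally show ?thesis .
    qed
    then obtain \<psi> where psi: "is_sigma (Suc (Suc m)) \<psi>" "fm_consts \<psi> \<subseteq> K" "fv \<psi> \<subseteq> fv \<psi>1" "equivP \<psi> \<psi>1"
      using less.hyps[OF _ psi1(1) c1] by blast
    have "fv \<psi> \<subseteq> fv \<phi>" using psi(3) psi1(3) by (rule subset_trans)
    moreover have "equivP \<psi> \<phi>" using psi(4) psi1(4) unfolding equivP_def by simp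
    ultimately show ?thesis using psi(1,2) by blast
  qed
qed



lemma young_le_refl: "young_le x x" by (simp add: young_le_def)
lemma young_le_antisym: "young_le x y \<Longrightarrow> young_le y x \<Longrightarrow> x = y"
  unfolding young_le_def by (auto intro!: nth_equalityI simp: le_antisym)
lemma young_le_trans: "young_le x y \<Longrightarrow> young_le y z \<Longrightarrow> young_le x z"
  unfolding young_le_def
proof (intro conjI allI impI)
  assume a: "length x \<le> length y \<and> (\<forall>i<length x. x ! i \<le> y ! i)"
     and b: "length y \<le> length z \<and> (\<forall>i<length y. y ! i \<le> z ! i)"
  then show "length x \<le> length z" by simp
  fix i assume "i < length x"
  then have "x!i \<le> y!i" "y!i \<le> z!i" using a b by auto
  then show "x!i \<le> z!i" by simp
qed

lemma part_nth_mono: "is_partition w \<Longrightarrow> i \<le> j \<Longrightarrow> j < length w \<Longrightarrow> w!j \<le> w!i"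
  unfolding is_partition_def using sorted_wrt_nth_less[of "(\<ge>)" w i j]
  by (cases "i = j") auto

lemma part_nth_pos: "is_partition w \<Longrightarrow> i < length w \<Longrightarrow> 0 < w!i"
  unfolding is_partition_def by auto

lemma le_rep: "is_partition w \<Longrightarrow>
   young_le (replicate b a) w \<longleftrightarrow> (b = 0 \<or> (b \<le> length w \<and> a \<le> w!(b-1)))"
proof -
  assume w: "is_partition w"
  have "young_le (replicate b a) w \<longleftrightarrow> b \<le> length w \<and> (\<forall>i<b. a \<le> w!i)"
    by (simp add: young_le_def)
  also have "\<dots> \<longleftrightarrow> (b = 0 \<or> (b \<le> length w \<and> a \<le> w!(b-1)))"
  proof (cases b)
    case 0 then show ?thesis by simp
  next
    case (Suc c)
    have "(\<forall>i<b. a \<le> w!i) \<longleftrightarrow> a \<le> w!c" if "b \<le> length w"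
    proof
      assume "\<forall>i<b. a \<le> w!i" then show "a \<le> w!c" using Suc by auto
    next
      assume "a \<le> w!c"
      show "\<forall>i<b. a \<le> w!i"
      proof (intro allI impI)
        fix i assume "i < b"
        then have "w!c \<le> w!i" using part_nth_mono[OF w, of i c] Suc that by auto
        then show "a \<le> w!i" using \<open>a \<le> w!c\<close> by simp
      qed
    qed
    then show ?thesis using Suc by auto
  qed
  finally show ?thesis .
qed

lemma part_P: "w \<in> Partitions \<longleftrightarrow> is_partition w" by (simp add: Partitions_def)

lemma max_general:
  assumes w: "is_partition w"
  shows "young_le w p \<longleftrightarrow>
    (\<forall>i<length p. \<not> young_le (replicate (Suc i) (Suc (p!i))) w) \<and> \<not> young_le (replicate (Suc (length p)) 1) w"
proof -
  have A: "\<not> young_le (replicate (Suc i) (Suc (p!i))) w \<longleftrightarrow> (i < length w \<longrightarrow> w!i \<le> p!i)" for i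
    using le_rep[OF w, of "Suc i" "Suc (p!i)"] by auto
  have B: "\<not> young_le (replicate (Suc (length p)) 1) w \<longleftrightarrow> length w \<le> length p"
    using le_rep[OF w, of "Suc (length p)" 1] part_nth_pos[OF w, of "length p"]
    by (cases "length p < length w") auto
  have C: "young_le w p \<longleftrightarrow> (\<forall>i<length p. (i < length w \<longrightarrow> w!i \<le> p!i)) \<and> length w \<le> length p"
    by (auto simp: young_le_def)
  show ?thesis unfolding C by (simp only: A B)
qed

lemma max_rect:
  assumes w: "is_partition w"
  shows "young_le w (replicate b a) \<longleftrightarrow>
    \<not> young_le [Suc a] w \<and> \<not> young_le (replicate (Suc b) 1) w"
proof -
  have A: "\<not> young_le [Suc a] w \<longleftrightarrow> (0 < length w \<longrightarrow> w!0 \<le> a)"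
    using le_rep[OF w, of 1 "Suc a"] by (cases w) auto
  have B: "\<not> young_le (replicate (Suc b) 1) w \<longleftrightarrow> length w \<le> b"
    using le_rep[OF w, of "Suc b" 1] part_nth_pos[OF w, of b] by (cases "b < length w") auto
  have C: "(\<forall>i<length w. w!i \<le> a) \<longleftrightarrow> (0 < length w \<longrightarrow> w!0 \<le> a)"
  proof
    assume "\<forall>i<length w. w!i \<le> a" then show "0 < length w \<longrightarrow> w!0 \<le> a" by simp
  next
    assume h: "0 < length w \<longrightarrow> w!0 \<le> a"
    show "\<forall>i<length w. w!i \<le> a"
    proof (intro allI impI)
      fix i assume i: "i < length w"
      then have "w!i \<le> w!0" using part_nth_mono[OF w, of 0 i] by simp
      moreover have "w!0 \<le> a" using h i by (cases w) auto
      ultimately show "w!i \<le> a" by simp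
    qed
  qed
  have C2: "young_le w (replicate b a) \<longleftrightarrow> length w \<le> b \<and> (\<forall>i<length w. w!i \<le> a)"
    by (auto simp: young_le_def)
  show ?thesis unfolding C2 A B C by blast
qed

definition ideal :: "nat list \<Rightarrow> nat list set" where
  "ideal y = {w \<in> Partitions. young_le w y}"

definition row :: "nat \<Rightarrow> nat list" where
  "row k = (if k = 0 then [] else [k])"

lemma row_inj: "inj row" by (auto simp: inj_def row_def split: if_splits)
lemma row_P: "row k \<in> Partitions" by (simp add: row_def part_P is_partition_def)

lemma ideal_row: "ideal (row k) = row ` {..k}"
proof
  show "ideal (row k) \<subseteq> row ` {..k}"
  proof
    fix w assume "w \<in> ideal (row k)"
    then have w: "is_partition w" "young_le w (row k)" by (auto simp: ideal_def part_P)
    show "w \<in> row ` {..k}"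
    proof (cases w)
      case Nil then show ?thesis by (auto simp: row_def intro!: image_eqI[of _ _ 0])
    next
      case (Cons a v)
      then have "v = []" "a \<le> k" "0 < a" using w
        by (auto simp: young_le_def row_def is_partition_def split: if_splits)
      then show ?thesis using Cons by (auto simp: row_def intro!: image_eqI[of _ _ a])
    qed
  qed
next
  show "row ` {..k} \<subseteq> ideal (row k)"
  proof
    fix x assume "x \<in> row ` {..k}"
    then obtain j where j: "j \<le> k" "x = row j" by auto
    have "young_le (row j) (row k)" using j by (auto simp: young_le_def row_def)
    then show "x \<in> ideal (row k)" using row_P j by (simp add: ideal_def)
  qed
qed

definition col :: "nat \<Rightarrow> nat list" where
  "col k = replicate k 1"

lemma col_inj: "inj col" by (auto simp: inj_def col_def)
lemma col_P: "col k \<in> Partitions" by (simp add: col_def part_P is_partition_def sorted_wrt_iff_nth_less)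

lemma ideal_col: "ideal (col k) = col ` {..k}"
proof
  show "ideal (col k) \<subseteq> col ` {..k}"
  proof
    fix w assume "w \<in> ideal (col k)"
    then have w: "is_partition w" "young_le w (col k)" by (auto simp: ideal_def part_P)
    have "\<forall>x\<in>set w. x = 1"
    proof
      fix x assume "x \<in> set w"
      then obtain i where "i < length w" "w!i = x" by (auto simp: in_set_conv_nth)
      then show "x = 1" using w part_nth_pos[OF w(1), of i] by (auto simp: young_le_def col_def)
    qed
    then have "w = col (length w)" by (simp add: col_def replicate_length_same)
    moreover have "length w \<le> k" using w by (simp add: young_le_def col_def)
    ultimately show "w \<in> col ` {..k}" by auto
  qed
next
  show "col ` {..k} \<subseteq> ideal (col k)"
  proof
    fix x assume "x \<in> col ` {..k}"
    then obtain j where j: "j \<le> k" "x = col j" by auto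
    have "young_le (col j) (col k)" using j by (auto simp: young_le_def col_def)
    then show "x \<in> ideal (col k)" using col_P j by (simp add: ideal_def)
  qed
qed

lemma card_match:
  fixes m k :: nat
  assumes "inj_on g {..m}" "g ` {..m} = f ` {..k}" "inj f"
  shows "m = k"
proof -
  have "card (g ` {..m}) = Suc m" using assms(1) by (simp add: card_image)
  moreover have "card (f ` {..k}) = Suc k" using assms(3) by (simp add: card_image inj_on_subset)
  ultimately show ?thesis using assms(2) by simp
qed

lemma exists_enum:
  assumes "inj f"
  shows "\<exists>g. inj_on g {..m} \<and> g ` {..m} = f ` {..m}"
  using assms by (intro exI[of _ f]) (auto intro: inj_on_subset)

lemma row_sem:
  assumes y: "y \<in> Partitions"
  shows "(\<not> young_le [1,1] y \<and> (\<exists>g. inj_on g {..m} \<and> g ` {..m} = ideal y)) \<longleftrightarrow> y = row m"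
proof
  assume A: "\<not> young_le [1,1] y \<and> (\<exists>g. inj_on g {..m} \<and> g ` {..m} = ideal y)"
  have yp: "is_partition y" using y by (simp add: part_P)
  have r: "young_le [1,1] y \<longleftrightarrow> (2 \<le> length y \<and> 1 \<le> y!1)"
    using le_rep[OF yp, of 2 1] by (simp add: numeral_2_eq_2)
  have "\<not> 1 < length y"
  proof
    assume "1 < length y"
    then have "young_le [1,1] y" using r part_nth_pos[OF yp, of 1] by auto
    then show False using A by simp
  qed
  then have "length y \<le> 1" by simp
  have "\<exists>k. y = row k"
  proof (cases y)
    case Nil then show ?thesis by (intro exI[of _ 0]) (simp add: row_def)
  next
    case (Cons a v)
    then have "v = []" "0 < a" using \<open>length y \<le> 1\<close> yp by (auto simp: is_partition_def)
    then show ?thesis using Cons by (intro exI[of _ a]) (simp add: row_def)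
  qed
  then obtain k where k: "y = row k" by blast
  obtain g where "inj_on g {..m}" "g ` {..m} = row ` {..k}" using A k ideal_row by auto
  then have "m = k" using card_match row_inj by blast
  then show "y = row m" using k by simp
next
  assume "y = row m"
  moreover have "\<not> young_le [1,1] (row m)" by (simp add: young_le_def row_def)
  ultimately show "\<not> young_le [1,1] y \<and> (\<exists>g. inj_on g {..m} \<and> g ` {..m} = ideal y)"
    using ideal_row exists_enum[OF row_inj] by auto
qed

lemma col_sem:
  assumes y: "y \<in> Partitions"
  shows "(\<not> young_le [2] y \<and> (\<exists>g. inj_on g {..m} \<and> g ` {..m} = ideal y)) \<longleftrightarrow> y = col m"
proof
  assume A: "\<not> young_le [2] y \<and> (\<exists>g. inj_on g {..m} \<and> g ` {..m} = ideal y)"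
  have yp: "is_partition y" using y by (simp add: part_P)
  have "\<forall>x\<in>set y. x = 1"
  proof
    fix x assume "x \<in> set y"
    then obtain i where i: "i < length y" "y!i = x" by (auto simp: in_set_conv_nth)
    have "y!0 < 2" using A le_rep[OF yp, of 1 2] i by auto
    moreover have "y!i \<le> y!0" using part_nth_mono[OF yp, of 0 i] i by auto
    ultimately show "x = 1" using part_nth_pos[OF yp, of i] i by auto
  qed
  then have k: "y = col (length y)" by (simp add: col_def replicate_length_same)
  obtain g where "inj_on g {..m}" "g ` {..m} = col ` {..length y}" using A k ideal_col by metis
  then have "m = length y" using card_match col_inj by blast
  then show "y = col m" using k by simp
next
  assume "y = col m"
  moreover have "\<not> young_le [2] (col m)" by (cases m) (simp_all add: young_le_def col_def)
  ultimately show "\<not> young_le [2] y \<and> (\<exists>g. inj_on g {..m} \<and> g ` {..m} = ideal y)"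
    using ideal_col exists_enum[OF col_inj] by auto
qed



definition conjL :: "nat \<Rightarrow> 'c fm list \<Rightarrow> 'c fm" where
  "conjL v fs = foldr Conj fs (Eq (Var v) (Var v))"
definition disjL :: "nat \<Rightarrow> 'c fm list \<Rightarrow> 'c fm" where
  "disjL v fs = foldr Disj fs (Neg (Eq (Var v) (Var v)))"

lemma sat_conjL[simp]: "sat I e (conjL v fs) \<longleftrightarrow> (\<forall>f\<in>set fs. sat I e f)"
  by (induction fs) (auto simp: conjL_def)
lemma sat_disjL[simp]: "sat I e (disjL v fs) \<longleftrightarrow> (\<exists>f\<in>set fs. sat I e f)"
  by (induction fs) (auto simp: disjL_def)
lemma fv_conjL[simp]: "fv (conjL v fs) = insert v (\<Union>f\<in>set fs. fv f)"
  by (induction fs) (auto simp: conjL_def)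
lemma fv_disjL[simp]: "fv (disjL v fs) = insert v (\<Union>f\<in>set fs. fv f)"
  by (induction fs) (auto simp: disjL_def)
lemma consts_conjL[simp]: "fm_consts (conjL v fs) = (\<Union>f\<in>set fs. fm_consts f)"
  by (induction fs) (auto simp: conjL_def)
lemma consts_disjL[simp]: "fm_consts (disjL v fs) = (\<Union>f\<in>set fs. fm_consts f)"
  by (induction fs) (auto simp: disjL_def)
lemma qfree_conjL[simp]: "qfree (conjL v fs) \<longleftrightarrow> (\<forall>f\<in>set fs. qfree f)"
  by (induction fs) (auto simp: conjL_def)
lemma qfree_disjL[simp]: "qfree (disjL v fs) \<longleftrightarrow> (\<forall>f\<in>set fs. qfree f)"
  by (induction fs) (auto simp: disjL_def)

definition iffF :: "'c fm \<Rightarrow> 'c fm \<Rightarrow> 'c fm" where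
  "iffF a b = Conj (Disj (Neg a) b) (Disj a (Neg b))"

lemma sat_iffF[simp]: "sat I e (iffF a b) \<longleftrightarrow> (sat I e a \<longleftrightarrow> sat I e b)"
  by (auto simp: iffF_def)
lemma fv_iffF[simp]: "fv (iffF a b) = fv a \<union> fv b" by (auto simp: iffF_def)
lemma consts_iffF[simp]: "fm_consts (iffF a b) = fm_consts a \<union> fm_consts b" by (auto simp: iffF_def)
lemma qfree_iffF[simp]: "qfree (iffF a b) \<longleftrightarrow> qfree a \<and> qfree b" by (auto simp: iffF_def)

lemma definer_max:
  assumes K: "set ts \<subseteq> K" and pP: "p \<in> Partitions"
    and M: "\<forall>w\<in>Partitions. young_le w p \<longleftrightarrow> (\<forall>t\<in>set ts. \<not> young_le t w)"
  shows "definer K p"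
  unfolding definer_def
proof (intro allI)
  fix N
  define \<theta> where "\<theta> = iffF (Le (Var (Suc N)) (Var N)) (conjL N (map (\<lambda>t. Neg (Le (Cst t) (Var (Suc N)))) ts))"
  have q: "qfree \<theta>" by (simp add: \<theta>_def)
  have f: "fv (Exs [] (Alls [Suc N] \<theta>)) \<subseteq> {N}" by (auto simp: \<theta>_def)
  have c: "fm_consts \<theta> \<subseteq> K" using K by (auto simp: \<theta>_def)
  have s: "sat id e (Exs [] (Alls [Suc N] \<theta>)) \<longleftrightarrow> e N = p" if eP: "\<forall>i. e i \<in> Partitions" for e
  proof -
    have "sat id e (Exs [] (Alls [Suc N] \<theta>)) \<longleftrightarrow>
        (\<forall>w\<in>Partitions. young_le w (e N) \<longleftrightarrow> (\<forall>t\<in>set ts. \<not> young_le t w))"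
      by (simp add: \<theta>_def)
    also have "\<dots> \<longleftrightarrow> e N = p"
    proof
      assume A: "\<forall>w\<in>Partitions. young_le w (e N) \<longleftrightarrow> (\<forall>t\<in>set ts. \<not> young_le t w)"
      have "young_le (e N) p" using A M eP young_le_refl by blast
      moreover have "young_le p (e N)" using A M pP young_le_refl by blast
      ultimately show "e N = p" by (rule young_le_antisym)
    next
      assume "e N = p" then show "\<forall>w\<in>Partitions. young_le w (e N) \<longleftrightarrow> (\<forall>t\<in>set ts. \<not> young_le t w)"
        using M by simp
    qed
    finally show ?thesis .
  qed
  show "\<exists>us ws \<theta>. qfree \<theta> \<and> set us \<union> set ws \<subseteq> {N<..} \<and>
      fv (Exs us (Alls ws \<theta>)) \<subseteq> {N} \<and> fm_consts \<theta> \<subseteq> K \<and>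
      (\<forall>e. (\<forall>i. e i \<in> Partitions) \<longrightarrow> (sat id e (Exs us (Alls ws \<theta>)) \<longleftrightarrow> e N = p))"
    by (rule exI[of _ "[]"], rule exI[of _ "[Suc N]"], rule exI[of _ \<theta>]) (use q f c s in auto)
qed



definition distF :: "nat \<Rightarrow> nat list \<Rightarrow> 'c fm list" where
  "distF N zs = concat (map (\<lambda>i. map (\<lambda>j. Neg (Eq (Var i) (Var j))) (filter (\<lambda>j. j \<noteq> i) zs)) zs)"

lemma sat_distF: "(\<forall>f\<in>set (distF N zs). sat I e f) \<longleftrightarrow> (\<forall>i\<in>set zs. \<forall>j\<in>set zs. i \<noteq> j \<longrightarrow> e i \<noteq> e j)"
  by (auto simp: distF_def)
lemma fv_distF: "(\<Union>f\<in>set (distF N zs). fv f) \<subseteq> set zs"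
  by (auto simp: distF_def)
lemma consts_distF: "(\<Union>f\<in>set (distF N zs). fm_consts f) = {}"
  by (auto simp: distF_def)
lemma qfree_distF: "\<forall>f\<in>set (distF N zs). qfree f"
  by (auto simp: distF_def)

definition cntTh :: "nat \<Rightarrow> nat \<Rightarrow> nat list \<Rightarrow> nat list fm" where
  "cntTh N m q = (let zs = [Suc N..<Suc N + Suc m]; W = Suc N + Suc m in
     conjL N (distF N zs @ map (\<lambda>i. Le (Var i) (Var N)) zs @
       [Disj (Neg (Le (Var W) (Var N))) (disjL N (map (\<lambda>i. Eq (Var W) (Var i)) zs)),
        Neg (Le (Cst q) (Var N))]))"

lemma sat_cntTh:
  assumes "N \<notin> set zs" "W \<notin> set zs" "W \<noteq> N" "zs = [Suc N..<Suc N + Suc m]" "W = Suc N + Suc m"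
  shows "sat id (e(W:=w)) (cntTh N m q) \<longleftrightarrow>
    (\<forall>i\<in>set zs. \<forall>j\<in>set zs. i \<noteq> j \<longrightarrow> e i \<noteq> e j) \<and> (\<forall>i\<in>set zs. young_le (e i) (e N)) \<and>
    (young_le w (e N) \<longrightarrow> (\<exists>i\<in>set zs. w = e i)) \<and> \<not> young_le q (e N)"
proof -
  have a: "(\<forall>f\<in>set (distF N zs). sat id (e(W:=w)) f) \<longleftrightarrow> (\<forall>i\<in>set zs. \<forall>j\<in>set zs. i \<noteq> j \<longrightarrow> e i \<noteq> e j)"
    unfolding sat_distF using assms(2) by (metis fun_upd_other)
  have eq: "cntTh N m q = conjL N (distF N zs @ map (\<lambda>i. Le (Var i) (Var N)) zs @
       [Disj (Neg (Le (Var W) (Var N))) (disjL N (map (\<lambda>i. Eq (Var W) (Var i)) zs)),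
        Neg (Le (Cst q) (Var N))])"
    unfolding cntTh_def Let_def assms(4,5) by (rule refl)
  show ?thesis unfolding eq sat_conjL set_append ball_Un a
    using assms(1,2,3) by auto
qed

lemma definer_cnt:
  fixes m :: nat
  assumes K: "q \<in> K" and pP: "p \<in> Partitions"
    and M: "\<forall>y\<in>Partitions. (\<not> young_le q y \<and> (\<exists>g. inj_on g {..m} \<and> g ` {..m} = ideal y)) \<longleftrightarrow> y = p"
  shows "definer K p"
  unfolding definer_def
proof (intro allI)
  fix N
  define zs where "zs = [Suc N..<Suc N + Suc m]"
  define W where "W = Suc N + Suc m"
  define \<theta> where "\<theta> = cntTh N m q"
  have zs: "set zs = {Suc N..<Suc N + Suc m}" unfolding zs_def by (rule set_upt)
  have nz: "N \<notin> set zs" "W \<notin> set zs" "W \<noteq> N" by (auto simp: zs W_def)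
  have th_eq: "\<theta> = conjL N (distF N zs @ map (\<lambda>i. Le (Var i) (Var N)) zs @
       [Disj (Neg (Le (Var W) (Var N))) (disjL N (map (\<lambda>i. Eq (Var W) (Var i)) zs)),
        Neg (Le (Cst q) (Var N))])"
    unfolding \<theta>_def cntTh_def Let_def zs_def W_def by (rule refl)
  have q: "qfree \<theta>" using qfree_distF[of N zs] unfolding th_eq by auto
  have fth: "fv \<theta> \<subseteq> insert N (insert W (set zs))"
    using fv_distF[of N zs] unfolding th_eq by auto
  have f: "fv (Exs zs (Alls [W] \<theta>)) \<subseteq> {N}" using fth by auto
  have c: "fm_consts \<theta> \<subseteq> K" using K consts_distF[of N zs] unfolding th_eq by auto
  have b: "set zs \<union> set [W] \<subseteq> {N<..}" by (auto simp: zs W_def)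
  have s: "sat id e (Exs zs (Alls [W] \<theta>)) \<longleftrightarrow> e N = p" if eP: "\<forall>i. e i \<in> Partitions" for e
  proof -
    have th: "sat id (e'(W:=w)) \<theta> \<longleftrightarrow>
      (\<forall>i\<in>set zs. \<forall>j\<in>set zs. i \<noteq> j \<longrightarrow> e' i \<noteq> e' j) \<and> (\<forall>i\<in>set zs. young_le (e' i) (e' N)) \<and>
      (young_le w (e' N) \<longrightarrow> (\<exists>i\<in>set zs. w = e' i)) \<and> \<not> young_le q (e' N)" for e' w
      unfolding \<theta>_def by (rule sat_cntTh[OF nz zs_def W_def])
    have "sat id e (Exs zs (Alls [W] \<theta>)) \<longleftrightarrow>
       (\<not> young_le q (e N) \<and> (\<exists>g. inj_on g {..m} \<and> g ` {..m} = ideal (e N)))"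
    proof
      assume "sat id e (Exs zs (Alls [W] \<theta>))"
      then obtain e' where e': "\<forall>i. i \<notin> set zs \<longrightarrow> e' i = e i" "\<forall>i\<in>set zs. e' i \<in> Partitions"
        "\<forall>w\<in>Partitions. sat id (e'(W:=w)) \<theta>"
        unfolding sat_Exs by auto
      have eN: "e' N = e N" using e'(1) nz by auto
      have T: "\<forall>w\<in>Partitions. (\<forall>i\<in>set zs. \<forall>j\<in>set zs. i \<noteq> j \<longrightarrow> e' i \<noteq> e' j) \<and> (\<forall>i\<in>set zs. young_le (e' i) (e N)) \<and>
        (young_le w (e N) \<longrightarrow> (\<exists>i\<in>set zs. w = e' i)) \<and> \<not> young_le q (e N)"
        using e'(3) th eN by simp
      then have T0: "(\<forall>i\<in>set zs. \<forall>j\<in>set zs. i \<noteq> j \<longrightarrow> e' i \<noteq> e' j)" "(\<forall>i\<in>set zs. young_le (e' i) (e N))"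
        "\<not> young_le q (e N)"
        using Partitions_nonempty by blast+
      define g where "g j = e' (Suc N + j)" for j
      have inz: "Suc N + j \<in> set zs" if "j \<le> m" for j using that zs by auto
      have "inj_on g {..m}"
      proof (rule inj_onI)
        fix j1 j2 assume "j1 \<in> {..m}" "j2 \<in> {..m}" "g j1 = g j2"
        then show "j1 = j2" using T0(1) inz unfolding g_def by (metis atMost_iff add_left_cancel)
      qed
      moreover have "g ` {..m} = ideal (e N)"
      proof
        show "g ` {..m} \<subseteq> ideal (e N)"
          using T0(2) e'(2) inz unfolding g_def ideal_def by auto
      next
        show "ideal (e N) \<subseteq> g ` {..m}"
        proof
          fix w assume "w \<in> ideal (e N)"
          then have "w \<in> Partitions" "young_le w (e N)" by (auto simp: ideal_def)
          then obtain i where i: "i \<in> set zs" "w = e' i" using T by blast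
          then have "i - Suc N \<le> m" "i = Suc N + (i - Suc N)" using zs by auto
          then show "w \<in> g ` {..m}" unfolding g_def using i by (metis atMost_iff image_eqI)
        qed
      qed
      ultimately show "\<not> young_le q (e N) \<and> (\<exists>g. inj_on g {..m} \<and> g ` {..m} = ideal (e N))"
        using T0(3) by blast
    next
      assume "\<not> young_le q (e N) \<and> (\<exists>g. inj_on g {..m} \<and> g ` {..m} = ideal (e N))"
      then obtain g where g: "inj_on g {..m}" "g ` {..m} = ideal (e N)" and nq: "\<not> young_le q (e N)" by blast
      define e' where "e' i = (if i \<in> set zs then g (i - Suc N) else e i)" for i
      have r: "i - Suc N \<le> m" if "i \<in> set zs" for i using that zs by auto
      have gi: "g (i - Suc N) \<in> ideal (e N)" if "i \<in> set zs" for i using g(2) r[OF that] by blast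
      have eN: "e' N = e N" using nz unfolding e'_def by simp
      have A1: "\<forall>i. i \<notin> set zs \<longrightarrow> e' i = e i" unfolding e'_def by simp
      have A2: "\<forall>i\<in>set zs. e' i \<in> Partitions" using gi unfolding e'_def ideal_def by auto
      have A3: "\<forall>i\<in>set zs. \<forall>j\<in>set zs. i \<noteq> j \<longrightarrow> e' i \<noteq> e' j"
      proof (intro ballI impI)
        fix i j assume ij: "i \<in> set zs" "j \<in> set zs" "i \<noteq> j"
        then have "i - Suc N \<noteq> j - Suc N" using zs by auto
        then have "g (i - Suc N) \<noteq> g (j - Suc N)" using g(1) r ij by (metis atMost_iff inj_on_eq_iff)
        then show "e' i \<noteq> e' j" using ij unfolding e'_def by simp
      qed
      have A4: "\<forall>i\<in>set zs. young_le (e' i) (e' N)" using gi eN unfolding e'_def ideal_def by auto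
      have A5: "\<exists>i\<in>set zs. w = e' i" if "w \<in> Partitions" "young_le w (e' N)" for w
      proof -
        have "w \<in> g ` {..m}" using that g(2) eN by (simp add: ideal_def)
        then obtain j where j: "j \<le> m" "w = g j" by auto
        have "Suc N + j \<in> set zs" using j zs by auto
        moreover have "e' (Suc N + j) = w" using j calculation unfolding e'_def by simp
        ultimately show ?thesis by metis
      qed
      have "\<forall>w\<in>Partitions. sat id (e'(W:=w)) \<theta>" using th A3 A4 A5 nq eN by simp
      then show "sat id e (Exs zs (Alls [W] \<theta>))" unfolding sat_Exs using A1 A2 by auto
    qed
    also have "\<dots> \<longleftrightarrow> e N = p" using M eP by blast
    finally show ?thesis .
  qed
  show "\<exists>us ws \<theta>. qfree \<theta> \<and> set us \<union> set ws \<subseteq> {N<..} \<and>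
      fv (Exs us (Alls ws \<theta>)) \<subseteq> {N} \<and> fm_consts \<theta> \<subseteq> K \<and>
      (\<forall>e. (\<forall>i. e i \<in> Partitions) \<longrightarrow> (sat id e (Exs us (Alls ws \<theta>)) \<longleftrightarrow> e N = p))"
    by (rule exI[of _ zs], rule exI[of _ "[W]"], rule exI[of _ \<theta>]) (use q f c s b in auto)
qed



definition "Rows = {p \<in> Partitions. length p \<le> 1}"
definition "Cols = {col b | b. 3 \<le> b}"
definition "Rects = {replicate b a | a b. 2 \<le> a \<and> 2 \<le> b}"
definition "K0 = {[1,1::nat]}"
definition "K1 = K0 \<union> Rows"
definition "K2 = K1 \<union> Cols"
definition "K3 = K2 \<union> Rects"

lemma rep_P: "0 < a \<Longrightarrow> replicate b a \<in> Partitions"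
  by (simp add: part_P is_partition_def sorted_wrt_iff_nth_less)

lemma single_Rows: "0 < a \<Longrightarrow> [a] \<in> Rows"
  by (simp add: Rows_def part_P is_partition_def)

lemma def_rows: "p \<in> Rows \<Longrightarrow> definer K0 p"
proof -
  assume p: "p \<in> Rows"
  then have pP: "p \<in> Partitions" and l: "length p \<le> 1" by (auto simp: Rows_def)
  have "\<exists>m. p = row m"
  proof (cases p)
    case Nil then show ?thesis by (intro exI[of _ 0]) (simp add: row_def)
  next
    case (Cons a v)
    then have "v = []" "0 < a" using l pP by (auto simp: part_P is_partition_def)
    then show ?thesis using Cons by (intro exI[of _ a]) (simp add: row_def)
  qed
  then obtain m where m: "p = row m" by blast
  show ?thesis
    by (rule definer_cnt[of "[1,1]" _ _ m]) (use pP m row_sem in \<open>auto simp: K0_def\<close>)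
qed

lemma def_cols: "p \<in> Cols \<Longrightarrow> definer K1 p"
proof -
  assume "p \<in> Cols"
  then obtain b where b: "p = col b" by (auto simp: Cols_def)
  have "[2] \<in> K1" using single_Rows[of 2] by (simp add: K1_def)
  then show ?thesis
    by (rule definer_cnt[of "[2]" _ _ b]) (use b col_P col_sem in auto)
qed

lemma def_rects: "p \<in> Rects \<Longrightarrow> definer K2 p"
proof -
  assume "p \<in> Rects"
  then obtain a b where ab: "p = replicate b a" "2 \<le> a" "2 \<le> b" by (auto simp: Rects_def)
  have "[Suc a] \<in> K2" using single_Rows[of "Suc a"] by (simp add: K2_def K1_def)
  moreover have "replicate (Suc b) 1 \<in> Cols" unfolding Cols_def col_def using ab
    by (auto intro!: exI[of _ "Suc b"])
  then have "replicate (Suc b) 1 \<in> K2" by (simp add: K2_def)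
  ultimately have s: "set [[Suc a], replicate (Suc b) 1] \<subseteq> K2" by simp
  show ?thesis
  proof (rule definer_max[OF s])
    show "p \<in> Partitions" using ab rep_P by simp
    show "\<forall>w\<in>Partitions. young_le w p \<longleftrightarrow> (\<forall>t\<in>set [[Suc a], replicate (Suc b) 1]. \<not> young_le t w)"
      using max_rect ab(1) by (simp add: part_P)
  qed
qed

lemma def_others: "p \<in> Partitions - K3 \<Longrightarrow> definer K3 p"
proof -
  assume p: "p \<in> Partitions - K3"
  then have pP: "p \<in> Partitions" "is_partition p" by (auto simp: part_P)
  have l: "2 \<le> length p" using p by (auto simp: K3_def K2_def K1_def Rows_def)
  define ts where "ts = map (\<lambda>i. replicate (Suc i) (Suc (p!i))) [0..<length p] @ [replicate (Suc (length p)) 1]"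
  have s: "set ts \<subseteq> K3"
  proof
    fix t assume "t \<in> set ts"
    then consider (a) i where "i < length p" "t = replicate (Suc i) (Suc (p!i))"
      | (b) "t = replicate (Suc (length p)) 1" unfolding ts_def by auto
    then show "t \<in> K3"
    proof cases
      case a
      have pos: "0 < p!i" using part_nth_pos[OF pP(2) a(1)] .
      show ?thesis
      proof (cases i)
        case 0 then show ?thesis using a single_Rows[of "Suc (p!0)"] by (simp add: K3_def K2_def K1_def)
      next
        case (Suc j) then show ?thesis using a pos unfolding K3_def Rects_def
          by (intro UnI2 CollectI exI[of _ "Suc (p!i)"] exI[of _ "Suc i"]) auto
      qed
    next
      case b
      have "replicate (Suc (length p)) 1 \<in> Cols" unfolding Cols_def col_def using l
        by (auto intro!: exI[of _ "Suc (length p)"])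
      then show ?thesis using b by (simp add: K3_def K2_def)
    qed
  qed
  show ?thesis
  proof (rule definer_max[OF s pP(1)])
    show "\<forall>w\<in>Partitions. young_le w p \<longleftrightarrow> (\<forall>t\<in>set ts. \<not> young_le t w)"
    proof
      fix w assume "w \<in> Partitions"
      then have w: "is_partition w" by (simp add: part_P)
      show "young_le w p \<longleftrightarrow> (\<forall>t\<in>set ts. \<not> young_le t w)"
        unfolding max_general[OF w] ts_def by auto
    qed
  qed
qed

lemma reduce_consts:
  assumes "is_sigma (Suc (Suc m)) \<phi>" "fm_consts \<phi> \<subseteq> Partitions"
  shows "\<exists>\<psi>. is_sigma (Suc (Suc m)) \<psi> \<and> fm_consts \<psi> \<subseteq> K0 \<and> fv \<psi> \<subseteq> fv \<phi> \<and> equivP \<psi> \<phi>"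
proof -
  have P3: "Partitions - K3 \<subseteq> Partitions" by blast
  have PR: "Rects \<subseteq> Partitions" using rep_P by (auto simp: Rects_def)
  have PC: "Cols \<subseteq> Partitions" using col_P by (auto simp: Cols_def)
  have PRo: "Rows \<subseteq> Partitions" by (auto simp: Rows_def)
  have D3: "K3 \<inter> (Partitions - K3) = {}" by blast
  have D2: "K2 \<inter> Rects = {}"
  proof -
    have "x \<notin> Rects" if "x \<in> K2" for x
    proof
      assume "x \<in> Rects"
      then obtain a b where ab: "x = replicate b a" "2 \<le> a" "2 \<le> b" by (auto simp: Rects_def)
      have "x \<notin> Rows" using ab by (auto simp: Rows_def)
      moreover have "x \<noteq> [1,1]" using ab by (cases b) auto
      moreover have "x \<notin> Cols"
      proof
        assume "x \<in> Cols"
        then obtain c where "x = replicate c 1" by (auto simp: Cols_def col_def)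
        then have "x!0 = 1" "x!0 = a" using ab by auto
        then show False using ab by simp
      qed
      ultimately show False using that by (auto simp: K2_def K1_def K0_def)
    qed
    then show ?thesis by blast
  qed
  have D1: "K1 \<inter> Cols = {}"
    by (auto simp: K1_def K0_def Rows_def Cols_def col_def dest: arg_cong[of _ _ length])
  have D0: "K0 \<inter> Rows = {}" by (auto simp: K0_def Rows_def)
  obtain \<psi>3 where p3: "is_sigma (Suc (Suc m)) \<psi>3" "fm_consts \<psi>3 \<subseteq> K3" "fv \<psi>3 \<subseteq> fv \<phi>" "equivP \<psi>3 \<phi>"
    using elim_class[OF D3 P3 ] def_others assms by blast
  obtain \<psi>2 where p2: "is_sigma (Suc (Suc m)) \<psi>2" "fm_consts \<psi>2 \<subseteq> K2" "fv \<psi>2 \<subseteq> fv \<psi>3" "equivP \<psi>2 \<psi>3"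
    using elim_class[OF D2 PR, of m \<psi>3] def_rects p3(1,2) unfolding K3_def by blast
  obtain \<psi>1 where p1: "is_sigma (Suc (Suc m)) \<psi>1" "fm_consts \<psi>1 \<subseteq> K1" "fv \<psi>1 \<subseteq> fv \<psi>2" "equivP \<psi>1 \<psi>2"
    using elim_class[OF D1 PC, of m \<psi>2] def_cols p2(1,2) unfolding K2_def by blast
  obtain \<psi>0 where p0: "is_sigma (Suc (Suc m)) \<psi>0" "fm_consts \<psi>0 \<subseteq> K0" "fv \<psi>0 \<subseteq> fv \<psi>1" "equivP \<psi>0 \<psi>1"
    using elim_class[OF D0 PRo, of m \<psi>1] def_rows p1(1,2) unfolding K1_def by blast
  have "fv \<psi>0 \<subseteq> fv \<phi>" using p0(3) p1(3) p2(3) p3(3) by blast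
  moreover have "equivP \<psi>0 \<phi>" using p0(4) p1(4) p2(4) p3(4) unfolding equivP_def by simp
  ultimately show ?thesis using p0(1,2) by blast
qed

theorem corollary5p2:
  fixes n k :: nat and R :: "nat list list set"
  assumes "n \<ge> 4"
    and "R \<subseteq> {xs. length xs = k \<and> set xs \<subseteq> Partitions}"
  shows "sigma_definable I_Ystar UNIV n k R \<longleftrightarrow> sigma_definable id Partitions n k R"
proof
  assume "sigma_definable I_Ystar UNIV n k R"
  then obtain \<phi> where phi: "is_sigma n \<phi>" "fv \<phi> \<subseteq> {..<k}"
    "\<forall>e. (\<forall>i. e i \<in> Partitions) \<longrightarrow> (sat I_Ystar e \<phi> \<longleftrightarrow> map e [0..<k] \<in> R)"
    unfolding sigma_definable_def by blast
  define \<psi> where "\<psi> = map_fm (\<lambda>_. [1,1::nat]) \<phi>"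
  have "is_sigma n \<psi>" using sigma_map phi(1) unfolding \<psi>_def by blast
  moreover have "fm_consts \<psi> \<subseteq> Partitions"
    unfolding \<psi>_def using rep_P[of 1 2] by (auto simp: numeral_2_eq_2)
  moreover have "fv \<psi> \<subseteq> {..<k}" using phi(2) unfolding \<psi>_def by simp
  moreover have "id \<circ> (\<lambda>_. [1,1::nat]) = I_Ystar" by (auto simp: I_Ystar_def)
  then have "\<forall>e. (\<forall>i. e i \<in> Partitions) \<longrightarrow> (sat id e \<psi> \<longleftrightarrow> map e [0..<k] \<in> R)"
    using phi(3) unfolding \<psi>_def sat_map by simp
  ultimately show "sigma_definable id Partitions n k R" unfolding sigma_definable_def by blast
next
  assume "sigma_definable id Partitions n k R"
  then obtain \<phi> where phi: "is_sigma n \<phi>" "fm_consts \<phi> \<subseteq> Partitions" "fv \<phi> \<subseteq> {..<k}"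
    "\<forall>e. (\<forall>i. e i \<in> Partitions) \<longrightarrow> (sat id e \<phi> \<longleftrightarrow> map e [0..<k] \<in> R)"
    unfolding sigma_definable_def by blast
  have "n = Suc (Suc (n - 2))" using assms(1) by arith
  then obtain m where m: "n = Suc (Suc m)" by blast
  obtain \<psi> where psi: "is_sigma n \<psi>" "fm_consts \<psi> \<subseteq> K0" "fv \<psi> \<subseteq> fv \<phi>" "equivP \<psi> \<phi>"
    using reduce_consts[of m \<phi>] phi(1,2) m by blast
  define \<chi> where "\<chi> = map_fm (\<lambda>_. ()) \<psi>"
  have "is_sigma n \<chi>" using sigma_map psi(1) unfolding \<chi>_def by blast
  moreover have "fm_consts \<chi> \<subseteq> UNIV" by simp
  moreover have "fv \<chi> \<subseteq> {..<k}" using psi(3) phi(3) unfolding \<chi>_def by simp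
  moreover have "sat I_Ystar e \<chi> \<longleftrightarrow> sat id e \<psi>" for e
  proof -
    have "sat I_Ystar e \<chi> = sat (I_Ystar \<circ> (\<lambda>_. ())) e \<psi>" unfolding \<chi>_def sat_map ..
    also have "\<dots> = sat id e \<psi>"
      by (rule sat_consts_cong) (use psi(2) in \<open>auto simp: K0_def I_Ystar_def\<close>)
    finally show ?thesis .
  qed
  then have "\<forall>e. (\<forall>i. e i \<in> Partitions) \<longrightarrow> (sat I_Ystar e \<chi> \<longleftrightarrow> map e [0..<k] \<in> R)"
    using psi(4) phi(4) unfolding equivP_def by simp
  ultimately show "sigma_definable I_Ystar UNIV n k R" unfolding sigma_definable_def by blast
qed

end
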